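(* Let $n$ be a positive even integer, $Q=[-1,1]^2$, $C_n=\frac{8}{(n+2)(n+3)}$, and let $MP_n=\{(x_m,y_{m,k}) : m=1,\dots,n+1,\ k=1,\dots,\tfrac n2+1\}$ be the Morrow-Patterson points, where $x_m=\cos\frac{m\pi}{n+2}$ and $y_{m,k}=\cos\frac{2k\pi}{n+3}$ if $m$ is odd, $y_{m,k}=\cos\frac{(2k-1)\pi}{n+3}$ if $m$ is even. Then: (i) For every polynomial $p\in\mathbb{P}^2_{2n}$, $$\frac{4}{\pi^2}\int_Q p(x,y)\sqrt{1-x^2}\sqrt{1-y^2}\,dx\,dy = C_n\sum_{m=1}^{n+1}\sum_{k=1}^{\frac n2+1}(1-x_m^2)(1-y_{m,k}^2)\,p(x_m,y_{m,k}).$$ (ii) Consequently, if $\omega_{m,k}$ is defined by $\frac{1}{\omega_{m,k}}=\sum_{i=0}^n\sum_{j=0}^{n-i}U_i^2(x_m)U_j^2(y_{m,k})$, then $\omega_{m,k}=C_n(1-x_m^2)(1-y_{m,k}^2)$. (iii) The projection $\mathcal C(Q)\to\mathbb{P}^2_n$ with respect to the discrete inner product $(u,v)_\star=\frac{\pi^2}{4}\sum_{m,k}\omega_{m,k}u(x_m,y_{m,k})v(x_m,y_{m,k})$ is an interpolation operator with nodes $MP_n$: for $f\in\mathcal C(Q)$ the polynomial $$L_nf(x,y)=C_n\sum_{m=1}^{n+1}\sum_{k=1}^{\frac n2+1}(1-x_m^2)(1-y_{m,k}^2)f(x_m,y_{m,k})\sum_{i=0}^n\sum_{j=0}^{n-i}U_i(x_m)U_j(y_{m,k})U_i(x)U_j(y)$$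 satisfies $L_nf(x_m,y_{m,k})=f(x_m,y_{m,k})$ for all $m,k$. (iv) The Lebesgue function of interpolation at $MP_n$ is $$\lambda_n(x,y)=C_n\sum_{m=1}^{n+1}\sum_{k=1}^{\frac n2+1}(1-x_m^2)(1-y_{m,k}^2)\Big|\sum_{i=0}^n\sum_{j=0}^{n-i}U_i(x_m)U_j(y_{m,k})U_i(x)U_j(y)\Big|.$$
   Context: $\mathbb{P}^2_d$ is the space of real bivariate polynomials of total degree at most $d$; $\mathcal C(Q)$ is the space of continuous real functions on $Q$. $U_j$ is the Chebyshev polynomial of the second kind of degree $j$, $U_j(\cos\theta)=\frac{\sin((j+1)\theta)}{\sin\theta}$. The set $MP_n$ has $\binom{n+2}{2}=\dim\mathbb{P}^2_n$ points. The Lebesgue function of interpolation at a unisolvent node set $\{a_s\}$ for $\mathbb{P}^2_n$ is $\lambda(x,y)=\sum_s|\ell_s(x,y)|$, where $\ell_s\in\mathbb{P}^2_n$ are the Lagrange basis polynomials ($\ell_s(a_t)=\delta_{st}$). *)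

theory Defs
  imports "HOL-Analysis.Analysis"
begin

text \<open>Chebyshev polynomials of the second kind, U_0 = 1, U_1 = 2x,
  U_{j+2} = 2x U_{j+1} - U_j (so that U_j(cos t) = sin((j+1)t)/sin t).\<close>
fun chebU :: "nat \<Rightarrow> real \<Rightarrow> real" where
  "chebU 0 x = 1"
| "chebU (Suc 0) x = 2 * x"
| "chebU (Suc (Suc j)) x = 2 * x * chebU (Suc j) x - chebU j x"

definition poly2 :: "nat \<Rightarrow> (real \<times> real \<Rightarrow> real) set" where
  "poly2 d = {p. \<exists>c :: nat \<Rightarrow> nat \<Rightarrow> real.
      \<forall>x y. p (x, y) = (\<Sum>i\<le>d. \<Sum>j\<le>d - i. c i j * x ^ i * y ^ j)}"

definition Q :: "(real \<times> real) set" where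
  "Q = cbox (-1, -1) (1, 1)"

definition Cn :: "nat \<Rightarrow> real" where
  "Cn n = 8 / ((real n + 2) * (real n + 3))"

definition MP_idx :: "nat \<Rightarrow> (nat \<times> nat) set" where
  "MP_idx n = {1..n+1} \<times> {1..n div 2 + 1}"

definition MP_x :: "nat \<Rightarrow> nat \<Rightarrow> real" where
  "MP_x n m = cos (real m * pi / (real n + 2))"

definition MP_y :: "nat \<Rightarrow> nat \<Rightarrow> nat \<Rightarrow> real" where
  "MP_y n m k = (if odd m then cos (2 * real k * pi / (real n + 3))
                 else cos ((2 * real k - 1) * pi / (real n + 3)))"

definition MP_node :: "nat \<Rightarrow> nat \<times> nat \<Rightarrow> real \<times> real" where
  "MP_node n s = (MP_x n (fst s), MP_y n (fst s) (snd s))"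

definition Kn :: "nat \<Rightarrow> real \<times> real \<Rightarrow> real \<times> real \<Rightarrow> real" where
  "Kn n a z = (\<Sum>i\<le>n. \<Sum>j\<le>n - i.
      chebU i (fst a) * chebU j (snd a) * chebU i (fst z) * chebU j (snd z))"

definition omega :: "nat \<Rightarrow> nat \<times> nat \<Rightarrow> real" where
  "omega n s = 1 / (\<Sum>i\<le>n. \<Sum>j\<le>n - i.
      (chebU i (fst (MP_node n s)))\<^sup>2 * (chebU j (snd (MP_node n s)))\<^sup>2)"

definition dip :: "nat \<Rightarrow> (real \<times> real \<Rightarrow> real) \<Rightarrow> (real \<times> real \<Rightarrow> real) \<Rightarrow> real" where
  "dip n u v = pi\<^sup>2 / 4 * (\<Sum>s\<in>MP_idx n. omega n s * u (MP_node n s) * v (MP_node n s))"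

definition Ln :: "nat \<Rightarrow> (real \<times> real \<Rightarrow> real) \<Rightarrow> real \<times> real \<Rightarrow> real" where
  "Ln n f z = Cn n * (\<Sum>s\<in>MP_idx n.
      (1 - (fst (MP_node n s))\<^sup>2) * (1 - (snd (MP_node n s))\<^sup>2) * f (MP_node n s)
      * Kn n (MP_node n s) z)"

definition lagrange_basis :: "nat \<Rightarrow> (nat \<times> nat \<Rightarrow> real \<times> real \<Rightarrow> real) \<Rightarrow> bool" where
  "lagrange_basis n l \<longleftrightarrow> (\<forall>s\<in>MP_idx n. l s \<in> poly2 n) \<and>
     (\<forall>s\<in>MP_idx n. \<forall>t\<in>MP_idx n. l s (MP_node n t) = (if s = t then 1 else 0))"

definition lebesgue_fun :: "nat \<Rightarrow> (nat \<times> nat \<Rightarrow> real \<times> real \<Rightarrow> real) \<Rightarrow> real \<times> real \<Rightarrow> real" where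
  "lebesgue_fun n l z = (\<Sum>s\<in>MP_idx n. \<bar>l s z\<bar>)"

end

theory Submission
  imports Defs "Jordan_Normal_Form.Determinant"
begin


lemma chebU_sin0: "x = cos t \<Longrightarrow> chebU j x * sin t = sin (real (Suc j) * t)"
proof (induction j x rule: chebU.induct)
  case (1 x) then show ?case by simp
next
  case (2 x) then show ?case by (simp add: sin_double)
next
  case (3 j x)
  then have "chebU (Suc (Suc j)) (cos t) * sin t = 2 * cos t * (chebU (Suc j) (cos t) * sin t) - chebU j (cos t) * sin t"
    by (simp add: algebra_simps)
  also have "\<dots> = 2 * cos t * sin (real (Suc (Suc j)) * t) - sin (real (Suc j) * t)"
    using 3 by simp
  also have "\<dots> = sin (real (Suc (Suc (Suc j))) * t)"
  proof -
    have a: "real (Suc (Suc (Suc j))) * t = real (Suc (Suc j)) * t + t" by (simp add: algebra_simps)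
    have b: "real (Suc j) * t = real (Suc (Suc j)) * t - t" by (simp add: algebra_simps)
    show ?thesis unfolding a b sin_add sin_diff by (simp add: algebra_simps)
  qed
  finally show ?case using 3 by simp
qed

lemma chebU_sin: "chebU j (cos t) * sin t = sin (real (Suc j) * t)"
  by (rule chebU_sin0) simp



definition span1 :: "(nat \<Rightarrow> real \<Rightarrow> real) \<Rightarrow> nat \<Rightarrow> (real \<Rightarrow> real) set" where
  "span1 \<psi> i = {f. \<exists>e. \<forall>x. f x = (\<Sum>k\<le>i. e k * \<psi> k x)}"

lemma chebU0: "chebU 0 = (\<lambda>x. 1)" by (rule ext) simp

lemma chebU1: "chebU (Suc 0) = (\<lambda>x. 2 * x)" by (rule ext) simp

lemma span1I: "(\<forall>x. f x = (\<Sum>k\<le>i. e k * \<psi> k x)) \<Longrightarrow> f \<in> span1 \<psi> i"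
  unfolding span1_def by blast

lemma span1_add: "f \<in> span1 \<psi> i \<Longrightarrow> g \<in> span1 \<psi> i \<Longrightarrow> (\<lambda>x. f x + g x) \<in> span1 \<psi> i"
proof -
  assume "f \<in> span1 \<psi> i" "g \<in> span1 \<psi> i"
  then obtain e1 e2 where "\<forall>x. f x = (\<Sum>k\<le>i. e1 k * \<psi> k x)" "\<forall>x. g x = (\<Sum>k\<le>i. e2 k * \<psi> k x)"
    unfolding span1_def by blast
  then have "\<forall>x. f x + g x = (\<Sum>k\<le>i. (e1 k + e2 k) * \<psi> k x)"
    by (simp add: sum.distrib algebra_simps)
  then show ?thesis by (rule span1I)
qed

lemma span1_smult: "f \<in> span1 \<psi> i \<Longrightarrow> (\<lambda>x. a * f x) \<in> span1 \<psi> i"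
proof -
  assume "f \<in> span1 \<psi> i"
  then obtain e1 where "\<forall>x. f x = (\<Sum>k\<le>i. e1 k * \<psi> k x)"
    unfolding span1_def by blast
  then have "\<forall>x. a * f x = (\<Sum>k\<le>i. (a * e1 k) * \<psi> k x)"
    by (simp add: sum_distrib_left algebra_simps)
  then show ?thesis by (rule span1I)
qed

lemma span1_zero: "(\<lambda>x. 0) \<in> span1 \<psi> i"
  unfolding span1_def by (rule CollectI, rule exI[of _ "\<lambda>_. 0"]) simp

lemma span1_sum: "finite A \<Longrightarrow> (\<And>a. a \<in> A \<Longrightarrow> f a \<in> span1 \<psi> i) \<Longrightarrow> (\<lambda>x. \<Sum>a\<in>A. f a x) \<in> span1 \<psi> i"
proof (induction A rule: finite_induct)
  case empty then show ?case using span1_zero by simp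
next
  case (insert a A)
  then show ?case using span1_add[of "f a" \<psi> i "\<lambda>x. \<Sum>a\<in>A. f a x"] by simp
qed

lemma span1_mono: "f \<in> span1 \<psi> i \<Longrightarrow> i \<le> i' \<Longrightarrow> f \<in> span1 \<psi> i'"
proof -
  assume "f \<in> span1 \<psi> i" "i \<le> i'"
  then obtain e1 where e1: "\<forall>x. f x = (\<Sum>k\<le>i. e1 k * \<psi> k x)"
    unfolding span1_def by blast
  have "\<forall>x. f x = (\<Sum>k\<le>i'. (if k \<le> i then e1 k else 0) * \<psi> k x)"
  proof
    fix x
    have "(\<Sum>k\<le>i'. (if k \<le> i then e1 k else 0) * \<psi> k x) = (\<Sum>k\<in>{..i'} \<inter> {k. k \<le> i}. e1 k * \<psi> k x)"
      by (simp add: sum.inter_restrict, rule sum.cong) auto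
    also have "{..i'} \<inter> {k. k \<le> i} = {..i}" using \<open>i \<le> i'\<close> by auto
    finally show "f x = (\<Sum>k\<le>i'. (if k \<le> i then e1 k else 0) * \<psi> k x)" using e1 by simp
  qed
  then show ?thesis by (rule span1I)
qed

lemma span1_basis: "k \<le> i \<Longrightarrow> \<psi> k \<in> span1 \<psi> i"
proof -
  assume k: "k \<le> i"
  have "\<forall>x. \<psi> k x = (\<Sum>j\<le>i. (if j = k then 1 else 0) * \<psi> j x)"
  proof
    fix x
    have "(\<Sum>j\<le>i. (if j = k then 1 else 0) * \<psi> j x) = (\<Sum>j\<le>i. (if j = k then \<psi> j x else 0))"
      by (rule sum.cong) auto
    also have "\<dots> = \<psi> k x" using k by simp
    finally show "\<psi> k x = (\<Sum>j\<le>i. (if j = k then 1 else 0) * \<psi> j x)" by simp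
  qed
  then show ?thesis by (rule span1I)
qed

lemma span1_pow_x: "f \<in> span1 (\<lambda>k x. x ^ k) i \<Longrightarrow> (\<lambda>x. x * f x) \<in> span1 (\<lambda>k x. x ^ k) (Suc i)"
proof -
  assume "f \<in> span1 (\<lambda>k x. x ^ k) i"
  then obtain e1 where e1: "\<forall>x. f x = (\<Sum>k\<le>i. e1 k * x ^ k)"
    unfolding span1_def by blast
  have "\<forall>x. x * f x = (\<Sum>k\<le>Suc i. (if k = 0 then 0 else e1 (k - 1)) * x ^ k)"
    using e1 by (simp add: sum.atMost_Suc_shift sum_distrib_left algebra_simps del: sum.atMost_Suc)
  then show ?thesis by (rule span1I)
qed

lemma chebU_span_pow2: "chebU i \<in> span1 (\<lambda>k x. x ^ k) i \<and> chebU (Suc i) \<in> span1 (\<lambda>k x. x ^ k) (Suc i)"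
proof (induction i)
  case 0
  have "chebU 0 \<in> span1 (\<lambda>k x. x ^ k) 0"
    using span1_basis[of 0 0 "\<lambda>k x. x ^ k"] by (simp add: chebU0)
  moreover have "chebU (Suc 0) \<in> span1 (\<lambda>k x. x ^ k) (Suc 0)"
    using span1_smult[OF span1_basis[of 1 1 "\<lambda>k x. x ^ k"], of 2]
    by (simp add: chebU1)
  ultimately show ?case by blast
next
  case (Suc j)
  have a: "(\<lambda>x. 2 * (x * chebU (Suc j) x)) \<in> span1 (\<lambda>k x. x ^ k) (Suc (Suc j))"
    by (rule span1_smult, rule span1_pow_x) (use Suc in blast)
  have b: "(\<lambda>x. (-1) * chebU j x) \<in> span1 (\<lambda>k x. x ^ k) (Suc (Suc j))"
    by (rule span1_smult, rule span1_mono) (use Suc in auto)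
  have e: "chebU (Suc (Suc j)) = (\<lambda>x. 2 * (x * chebU (Suc j) x) + (-1) * chebU j x)"
    by (rule ext) (simp add: algebra_simps)
  have "chebU (Suc (Suc j)) \<in> span1 (\<lambda>k x. x ^ k) (Suc (Suc j))"
    unfolding e by (rule span1_add[OF a b])
  then show ?case using Suc by blast
qed

lemma chebU_span_pow: "chebU i \<in> span1 (\<lambda>k x. x ^ k) i"
  using chebU_span_pow2 by blast

lemma x_chebU: "(\<lambda>x. x * chebU k x) \<in> span1 chebU (Suc k)"
proof (cases k)
  case 0
  then show ?thesis using span1_smult[OF span1_basis[of 1 1 chebU], of "1/2"]
    by (simp add: fun_eq_iff)
next
  case (Suc j)
  have a: "(\<lambda>x. (1/2) * chebU (Suc (Suc j)) x) \<in> span1 chebU (Suc k)"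
    using Suc by (intro span1_smult span1_basis) simp
  have b: "(\<lambda>x. (1/2) * chebU j x) \<in> span1 chebU (Suc k)"
    using Suc by (intro span1_smult span1_basis) simp
  show ?thesis using span1_add[OF a b] Suc by (simp add: fun_eq_iff algebra_simps)
qed

lemma pow_span_chebU: "(\<lambda>x. x ^ i) \<in> span1 chebU i"
proof (induction i)
  case 0
  then show ?case using span1_basis[of 0 0 chebU] by (simp add: chebU0)
next
  case (Suc i)
  then obtain e where e: "\<forall>x. x ^ i = (\<Sum>k\<le>i. e k * chebU k x)"
    unfolding span1_def by blast
  have "(\<lambda>x. \<Sum>k\<le>i. e k * (x * chebU k x)) \<in> span1 chebU (Suc i)"
    by (rule span1_sum, simp, rule span1_smult, rule span1_mono[OF x_chebU]) simp
  moreover have "(\<lambda>x. \<Sum>k\<le>i. e k * (x * chebU k x)) = (\<lambda>x. x ^ Suc i)"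
    using e by (simp add: fun_eq_iff sum_distrib_left algebra_simps)
  ultimately show ?case by simp
qed



definition span2 :: "(nat \<Rightarrow> real \<Rightarrow> real) \<Rightarrow> nat \<Rightarrow> (real \<times> real \<Rightarrow> real) set" where
  "span2 \<phi> d = {p. \<exists>c. \<forall>x y. p (x, y) = (\<Sum>i\<le>d. \<Sum>j\<le>d - i. c i j * \<phi> i x * \<phi> j y)}"

lemma span2I: "(\<forall>x y. p (x, y) = (\<Sum>i\<le>d. \<Sum>j\<le>d - i. c i j * \<phi> i x * \<phi> j y)) \<Longrightarrow> p \<in> span2 \<phi> d"
  unfolding span2_def by blast

lemma span2E: "p \<in> span2 \<phi> d \<Longrightarrow> (\<And>c. (\<And>x y. p (x, y) = (\<Sum>i\<le>d. \<Sum>j\<le>d - i. c i j * \<phi> i x * \<phi> j y)) \<Longrightarrow> thesis) \<Longrightarrow> thesis"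
  unfolding span2_def by blast

lemma span2_add: "p \<in> span2 \<phi> d \<Longrightarrow> q \<in> span2 \<phi> d \<Longrightarrow> (\<lambda>z. p z + q z) \<in> span2 \<phi> d"
proof -
  assume a: "p \<in> span2 \<phi> d" and b: "q \<in> span2 \<phi> d"
  obtain c1 where "\<And>x y. p (x, y) = (\<Sum>i\<le>d. \<Sum>j\<le>d - i. c1 i j * \<phi> i x * \<phi> j y)"
    using a unfolding span2_def by blast
  moreover obtain c2 where "\<And>x y. q (x, y) = (\<Sum>i\<le>d. \<Sum>j\<le>d - i. c2 i j * \<phi> i x * \<phi> j y)"
    using b unfolding span2_def by blast
  ultimately have "\<forall>x y. (\<lambda>z. p z + q z) (x, y) = (\<Sum>i\<le>d. \<Sum>j\<le>d - i. (c1 i j + c2 i j) * \<phi> i x * \<phi> j y)"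
    by (simp add: sum.distrib algebra_simps)
  then show ?thesis by (rule span2I)
qed

lemma span2_smult: "p \<in> span2 \<phi> d \<Longrightarrow> (\<lambda>z. a * p z) \<in> span2 \<phi> d"
proof -
  assume a: "p \<in> span2 \<phi> d"
  obtain c1 where "\<And>x y. p (x, y) = (\<Sum>i\<le>d. \<Sum>j\<le>d - i. c1 i j * \<phi> i x * \<phi> j y)"
    using a unfolding span2_def by blast
  then have "\<forall>x y. (\<lambda>z. a * p z) (x, y) = (\<Sum>i\<le>d. \<Sum>j\<le>d - i. (a * c1 i j) * \<phi> i x * \<phi> j y)"
    by (simp add: sum_distrib_left algebra_simps)
  then show ?thesis by (rule span2I)
qed

lemma span2_zero: "(\<lambda>z. 0) \<in> span2 \<phi> d"
  by (rule span2I[where c="\<lambda>i j. 0"]) simp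

lemma span2_sum: "finite A \<Longrightarrow> (\<And>a. a \<in> A \<Longrightarrow> f a \<in> span2 \<phi> d) \<Longrightarrow> (\<lambda>z. \<Sum>a\<in>A. f a z) \<in> span2 \<phi> d"
proof (induction A rule: finite_induct)
  case empty then show ?case using span2_zero by simp
next
  case (insert a A)
  then show ?case using span2_add[of "f a" \<phi> d "\<lambda>z. \<Sum>a\<in>A. f a z"] by simp
qed

lemma sum_ind: "finite B \<Longrightarrow> (\<Sum>b\<in>B. (if b = j then (1::real) else 0) * f b) = (if j \<in> B then f j else 0)"
proof -
  assume "finite B"
  have "(\<Sum>b\<in>B. (if b = j then (1::real) else 0) * f b) = (\<Sum>b\<in>B. if b = j then f b else 0)"
    by (rule sum.cong) auto
  then show ?thesis using \<open>finite B\<close> by simp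
qed

lemma span2_basis:
  assumes "i + j \<le> d"
  shows "(\<lambda>z. \<phi> i (fst z) * \<phi> j (snd z)) \<in> span2 \<phi> d"
proof (rule span2I[where c="\<lambda>a b. if a = i \<and> b = j then 1 else 0"], intro allI)
  fix x y
  have e1: "(\<Sum>b\<le>d-i. (if b = j then 1 else 0) * (\<phi> i x * \<phi> b y)) = \<phi> i x * \<phi> j y"
    using sum_ind[of "{..d-i}" j "\<lambda>b. \<phi> i x * \<phi> b y"] assms by simp
  have "(\<Sum>a\<le>d. \<Sum>b\<le>d - a. (if a = i \<and> b = j then 1 else 0) * \<phi> a x * \<phi> b y)
      = (\<Sum>a\<le>d. if a = i then (\<Sum>b\<le>d - i. (if b = j then 1 else 0) * (\<phi> i x * \<phi> b y)) else 0)"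
    by (rule sum.cong, simp, auto intro!: sum.cong)
  also have "\<dots> = \<phi> i x * \<phi> j y" using assms e1 by simp
  finally show "(\<lambda>z. \<phi> i (fst z) * \<phi> j (snd z)) (x, y) = (\<Sum>a\<le>d. \<Sum>b\<le>d - a. (if a = i \<and> b = j then 1 else 0) * \<phi> a x * \<phi> b y)"
    by simp
qed

lemma span2_transfer:
  assumes "\<And>i. \<phi> i \<in> span1 \<psi> i"
  shows "span2 \<phi> d \<subseteq> span2 \<psi> d"
proof
  fix p assume a: "p \<in> span2 \<phi> d"
  obtain c where c: "\<And>x y. p (x, y) = (\<Sum>i\<le>d. \<Sum>j\<le>d - i. c i j * \<phi> i x * \<phi> j y)"
    using a unfolding span2_def by blast
  have "\<forall>i. \<exists>e. \<forall>x. \<phi> i x = (\<Sum>k\<le>i. e k * \<psi> k x)" using assms unfolding span1_def by blast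
  then obtain E where E: "\<And>i x. \<phi> i x = (\<Sum>k\<le>i. E i k * \<psi> k x)" by metis
  have t: "(\<lambda>z. \<phi> i (fst z) * \<phi> j (snd z)) \<in> span2 \<psi> d" if ij: "i + j \<le> d" for i j
  proof -
    have "(\<lambda>z. \<Sum>a\<le>i. (\<lambda>a z. \<Sum>b\<le>j. (E i a * E j b) * (\<psi> a (fst z) * \<psi> b (snd z))) a z) \<in> span2 \<psi> d"
    proof (rule span2_sum, simp)
      fix a assume a: "a \<in> {..i}"
      show "(\<lambda>z. \<Sum>b\<le>j. (E i a * E j b) * (\<psi> a (fst z) * \<psi> b (snd z))) \<in> span2 \<psi> d"
      proof (rule span2_sum, simp)
        fix b assume b: "b \<in> {..j}"
        show "(\<lambda>z. (E i a * E j b) * (\<psi> a (fst z) * \<psi> b (snd z))) \<in> span2 \<psi> d"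
          by (rule span2_smult, rule span2_basis) (use a b ij in auto)
      qed
    qed
    moreover have "(\<lambda>z. \<Sum>a\<le>i. (\<lambda>a z. \<Sum>b\<le>j. (E i a * E j b) * (\<psi> a (fst z) * \<psi> b (snd z))) a z)
       = (\<lambda>z. \<phi> i (fst z) * \<phi> j (snd z))"
    proof (rule ext)
      fix z
      show "(\<Sum>a\<le>i. (\<lambda>a z. \<Sum>b\<le>j. (E i a * E j b) * (\<psi> a (fst z) * \<psi> b (snd z))) a z) = \<phi> i (fst z) * \<phi> j (snd z)"
        unfolding E[of i "fst z"] E[of j "snd z"] sum_product
        by (rule sum.cong[OF refl], rule sum.cong[OF refl]) (simp add: algebra_simps)
    qed
    ultimately show ?thesis by simp
  qed
  have "(\<lambda>z. \<Sum>i\<le>d. (\<lambda>i z. \<Sum>j\<le>d - i. c i j * (\<phi> i (fst z) * \<phi> j (snd z))) i z) \<in> span2 \<psi> d"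
  proof (rule span2_sum, simp)
    fix i assume i: "i \<in> {..d}"
    show "(\<lambda>z. \<Sum>j\<le>d - i. c i j * (\<phi> i (fst z) * \<phi> j (snd z))) \<in> span2 \<psi> d"
      by (rule span2_sum, simp, rule span2_smult, rule t) (use i in auto)
  qed
  moreover have "(\<lambda>z. \<Sum>i\<le>d. (\<lambda>i z. \<Sum>j\<le>d - i. c i j * (\<phi> i (fst z) * \<phi> j (snd z))) i z) = p"
  proof (rule ext)
    fix z :: "real \<times> real"
    obtain x y where z: "z = (x, y)" by fastforce
    show "(\<Sum>i\<le>d. (\<lambda>i z. \<Sum>j\<le>d - i. c i j * (\<phi> i (fst z) * \<phi> j (snd z))) i z) = p z"
      unfolding z c by (simp add: mult.assoc)
  qed
  ultimately show "p \<in> span2 \<psi> d" by simp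
qed

lemma poly2_span: "poly2 d = span2 (\<lambda>i x. x ^ i) d"
  unfolding poly2_def span2_def by simp

lemma poly2_chebU: "poly2 d = span2 chebU d"
  unfolding poly2_span
  by (rule equalityI; rule span2_transfer) (simp_all add: chebU_span_pow pow_span_chebU)



lemma tele_cos: "2 * sin (x / 2) * (\<Sum>m=1..M. cos (real m * x)) = sin ((real M + 1/2) * x) - sin (x / 2)"
proof (induction M)
  case 0 then show ?case by simp
next
  case (Suc M)
  have "2 * sin (x / 2) * (\<Sum>m=1..Suc M. cos (real m * x))
     = 2 * sin (x / 2) * (\<Sum>m=1..M. cos (real m * x)) + 2 * sin (x / 2) * cos (real (Suc M) * x)"
    by (simp add: algebra_simps)
  also have "2 * sin (x / 2) * cos (real (Suc M) * x) = sin ((real (Suc M) + 1/2) * x) - sin ((real M + 1/2) * x)"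
  proof -
    have "2 * sin (x / 2) * cos (real (Suc M) * x) = sin (x/2 + real (Suc M) * x) + sin (x/2 - real (Suc M) * x)"
      using sin_times_cos[of "x/2" "real (Suc M) * x"] by simp
    also have "x/2 + real (Suc M) * x = (real (Suc M) + 1/2) * x" by (simp add: algebra_simps)
    also have "x/2 - real (Suc M) * x = - ((real M + 1/2) * x)" by (simp add: algebra_simps)
    finally show ?thesis by simp
  qed
  finally show ?case using Suc by simp
qed

lemma cos_int_pi: "cos (of_int d * pi) = (if even d then 1 else -1)"
proof (cases "even d")
  case True
  then obtain q where "d = 2 * q" by (auto elim: evenE)
  then have "of_int d * pi = (2 * pi) * of_int q" by simp
  then have "cos (of_int d * pi) = 1" by (metis cos_int_2pin)
  then show ?thesis using True by simp
next
  case False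
  then obtain q where "d = 2 * q + 1" by (auto elim: oddE)
  then have "of_int d * pi = (2 * pi) * of_int q + pi" by (simp add: algebra_simps)
  then show ?thesis using False by (simp add: cos_add)
qed

lemma Esum:
  fixes N :: nat and d :: int
  assumes N: "N \<ge> 1"
  shows "(\<Sum>m=1..N-1. cos (of_int d * real m * pi / real N))
       = (if (2 * int N) dvd d then real N - 1 else if even d then -1 else 0)"
proof (cases "(2 * int N) dvd d")
  case True
  then obtain q where q: "d = 2 * int N * q" by blast
  have "cos (of_int d * real m * pi / real N) = 1" for m
  proof -
    have "of_int d * real m * pi / real N = (2 * pi) * of_int (q * int m)"
      using N by (simp add: q field_simps)
    then show ?thesis by (metis cos_int_2pin)
  qed
  then show ?thesis using True N by simp
next
  case False
  define y where "y = of_int d * pi / (2 * real N)"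
  have sy: "sin y \<noteq> 0"
  proof
    assume "sin y = 0"
    then obtain i :: int where "y = of_int i * pi" using sin_zero_iff_int2 by blast
    then have "of_int d = of_int i * (2 * real N)" using N by (simp add: y_def field_simps)
    then have "real_of_int d = real_of_int (i * (2 * int N))" by simp
    then have "d = i * (2 * int N)" by (simp only: of_int_eq_iff)
    then show False using False by simp
  qed
  have "2 * sin y * (\<Sum>m=1..N-1. cos (real m * (2 * y))) = sin ((real (N-1) + 1/2) * (2 * y)) - sin y"
    using tele_cos[of "2 * y" "N-1"] by simp
  also have "(real (N-1) + 1/2) * (2 * y) = of_int d * pi - y"
    using N by (simp add: y_def of_nat_diff field_simps)
  also have "sin (of_int d * pi - y) = - (if even d then 1 else -1) * sin y"
    by (simp add: sin_diff cos_int_pi mult.commute[of _ pi])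
  finally have *: "2 * sin y * (\<Sum>m=1..N-1. cos (real m * (2 * y))) = - ((if even d then 1 else -1) + 1) * sin y"
    by (simp add: algebra_simps)
  have "(\<Sum>m=1..N-1. cos (real m * (2 * y))) = - ((if even d then 1 else -1) + 1) / 2"
  proof -
    let ?S = "(\<Sum>m=1..N-1. cos (real m * (2 * y)))"
    let ?k = "(if even d then 1 else -1) :: real"
    have "sin y * (2 * ?S + (?k + 1)) = 0" using * by (simp only: algebra_simps) simp
    then have "2 * ?S + (?k + 1) = 0" using sy by simp
    then show ?thesis by (simp add: field_simps)
  qed
  moreover have "(\<Sum>m=1..N-1. cos (of_int d * real m * pi / real N)) = (\<Sum>m=1..N-1. cos (real m * (2 * y)))"
  proof (rule sum.cong[OF refl])
    fix m
    have "real m * (2 * y) = of_int d * real m * pi / real N"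
      using N by (simp add: y_def field_simps)
    then show "cos (of_int d * real m * pi / real N) = cos (real m * (2 * y))" by simp
  qed
  ultimately show ?thesis using False by (cases "even d") simp_all
qed

lemma Asum:
  fixes N a c :: nat
  assumes N: "N \<ge> 1"
  shows "(\<Sum>m=1..N-1. sin (real a * real m * pi / real N) * sin (real c * real m * pi / real N))
    = (if (2 * int N) dvd (int a - int c) then real N / 2 else 0)
      - (if (2 * int N) dvd (int a + int c) then real N / 2 else 0)"
proof -
  have "(\<Sum>m=1..N-1. sin (real a * real m * pi / real N) * sin (real c * real m * pi / real N))
     = (\<Sum>m=1..N-1. cos (of_int (int a - int c) * real m * pi / real N)
                 - cos (of_int (int a + int c) * real m * pi / real N)) / 2"
    unfolding sum_divide_distrib
  proof (rule sum.cong[OF refl])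
    fix m
    have e1: "real a * real m * pi / real N - real c * real m * pi / real N = of_int (int a - int c) * real m * pi / real N"
      using N by (simp add: field_simps)
    have e2: "real a * real m * pi / real N + real c * real m * pi / real N = of_int (int a + int c) * real m * pi / real N"
      using N by (simp add: field_simps)
    show "sin (real a * real m * pi / real N) * sin (real c * real m * pi / real N)
     = (cos (of_int (int a - int c) * real m * pi / real N)
                 - cos (of_int (int a + int c) * real m * pi / real N)) / 2"
      unfolding sin_times_sin e1 e2 by (rule refl)
  qed
  also have "\<dots> = ((\<Sum>m=1..N-1. cos (of_int (int a - int c) * real m * pi / real N))
                 - (\<Sum>m=1..N-1. cos (of_int (int a + int c) * real m * pi / real N))) / 2"
    by (simp add: sum_subtractf)
  also have "\<dots> = ((if (2 * int N) dvd (int a - int c) then real N - 1 else if even (int a - int c) then -1 else 0)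
       - (if (2 * int N) dvd (int a + int c) then real N - 1 else if even (int a + int c) then -1 else 0)) / 2"
    unfolding Esum[OF N] ..
  also have "\<dots> = (if (2 * int N) dvd (int a - int c) then real N / 2 else 0)
      - (if (2 * int N) dvd (int a + int c) then real N / 2 else 0)"
  proof -
    have p: "even (int a - int c) \<longleftrightarrow> even (int a + int c)" by presburger
    have d1: "(2 * int N) dvd x \<Longrightarrow> even x" for x :: int
      by (metis dvd_mult_left dvd_trans even_numeral)
    show ?thesis using p d1[of "int a - int c"] d1[of "int a + int c"] by (auto simp: field_simps)
  qed
  finally show ?thesis .
qed



lemma MP_reindex:
  assumes "even n"
  shows "(\<Sum>m=1..n+1. \<Sum>k=1..n div 2+1. G m (MP_y n m k))
       = (\<Sum>m=1..n+1. \<Sum>l=1..n+2. if odd (m + l) then G m (cos (real l * pi / real (n + 3))) else 0)"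
proof (rule sum.cong[OF refl])
  fix m
  have fin: "finite {1..n+2}" by simp
  have r: "(\<Sum>l=1..n+2. if odd (m + l) then G m (cos (real l * pi / real (n + 3))) else 0)
      = (\<Sum>l\<in>{1..n+2} \<inter> {l. odd (m + l)}. G m (cos (real l * pi / real (n + 3))))"
    by (simp only: sum.inter_restrict[OF fin] mem_Collect_eq)
  show "(\<Sum>k=1..n div 2+1. G m (MP_y n m k)) = (\<Sum>l=1..n+2. if odd (m + l) then G m (cos (real l * pi / real (n + 3))) else 0)"
  proof (cases "odd m")
    case True
    have S: "{1..n+2} \<inter> {l. odd (m + l)} = (\<lambda>k. 2 * k) ` {1..n div 2 + 1}"
    proof
      show "{1..n+2} \<inter> {l. odd (m + l)} \<subseteq> (\<lambda>k. 2 * k) ` {1..n div 2 + 1}"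
      proof
        fix l assume l: "l \<in> {1..n+2} \<inter> {l. odd (m + l)}"
        then have "even l" using True by auto
        then obtain k where "l = 2 * k" by (auto elim: evenE)
        then show "l \<in> (\<lambda>k. 2 * k) ` {1..n div 2 + 1}" using l assms by (auto elim!: evenE)
      qed
    next
      show "(\<lambda>k. 2 * k) ` {1..n div 2 + 1} \<subseteq> {1..n+2} \<inter> {l. odd (m + l)}"
        using True assms by (auto elim!: evenE)
    qed
    have "(\<Sum>l\<in>(\<lambda>k. 2 * k) ` {1..n div 2 + 1}. G m (cos (real l * pi / real (n + 3))))
        = (\<Sum>k=1..n div 2+1. G m (cos (real (2 * k) * pi / real (n + 3))))"
      by (rule sum.reindex_cong[where l="\<lambda>k. 2 * k"]) (auto simp: inj_on_def)
    also have "\<dots> = (\<Sum>k=1..n div 2+1. G m (MP_y n m k))"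
      using True by (simp add: MP_y_def add.commute)
    finally show ?thesis using r S by simp
  next
    case False
    have S: "{1..n+2} \<inter> {l. odd (m + l)} = (\<lambda>k. 2 * k - 1) ` {1..n div 2 + 1}"
    proof
      show "{1..n+2} \<inter> {l. odd (m + l)} \<subseteq> (\<lambda>k. 2 * k - 1) ` {1..n div 2 + 1}"
      proof
        fix l assume l: "l \<in> {1..n+2} \<inter> {l. odd (m + l)}"
        then have "odd l" using False by auto
        then obtain k where k: "l = 2 * k + 1" by (auto elim: oddE)
        then have "l = 2 * (k + 1) - 1" "k + 1 \<in> {1..n div 2 + 1}" using l assms by (auto elim!: evenE)
        then show "l \<in> (\<lambda>k. 2 * k - 1) ` {1..n div 2 + 1}" by blast
      qed
    next
      show "(\<lambda>k. 2 * k - 1) ` {1..n div 2 + 1} \<subseteq> {1..n+2} \<inter> {l. odd (m + l)}"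
      proof
        fix l assume "l \<in> (\<lambda>k. 2 * k - 1) ` {1..n div 2 + 1}"
        then obtain k where "l = 2 * k - 1" "1 \<le> k" "k \<le> n div 2 + 1" by auto
        then show "l \<in> {1..n+2} \<inter> {l. odd (m + l)}" using False assms by simp presburger
      qed
    qed
    have "(\<Sum>l\<in>(\<lambda>k. 2 * k - 1) ` {1..n div 2 + 1}. G m (cos (real l * pi / real (n + 3))))
        = (\<Sum>k=1..n div 2+1. G m (cos (real (2 * k - 1) * pi / real (n + 3))))"
      by (rule sum.reindex_cong[where l="\<lambda>k. 2 * k - 1"]) (auto simp: inj_on_def)
    also have "\<dots> = (\<Sum>k=1..n div 2+1. G m (MP_y n m k))"
    proof (rule sum.cong[OF refl])
      fix k assume "k \<in> {1..n div 2 + 1}"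
      then have "real (2 * k - 1) = 2 * real k - 1" by (simp add: of_nat_diff)
      then show "G m (cos (real (2 * k - 1) * pi / real (n + 3))) = G m (MP_y n m k)"
        using False by (simp add: MP_y_def add.commute)
    qed
    finally show ?thesis using r S by simp
  qed
qed

lemma parity_split:
  fixes f g :: "nat \<Rightarrow> real"
  shows "(\<Sum>m\<in>A. \<Sum>l\<in>B. if odd (m + l) then f m * g l else 0)
     = ((\<Sum>m\<in>A. f m) * (\<Sum>l\<in>B. g l) - (\<Sum>m\<in>A. (-1)^m * f m) * (\<Sum>l\<in>B. (-1)^l * g l)) / 2"
proof -
  have h: "(if odd (m + l) then f m * g l else 0) = (f m * g l - ((-1)^m * f m) * ((-1)^l * g l)) / 2" for m l
    by (auto simp: power_add)
  have "(\<Sum>m\<in>A. \<Sum>l\<in>B. if odd (m + l) then f m * g l else 0)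
      = (\<Sum>m\<in>A. \<Sum>l\<in>B. (f m * g l - ((-1)^m * f m) * ((-1)^l * g l)) / 2)"
    by (intro sum.cong refl) (rule h)
  also have "\<dots> = ((\<Sum>m\<in>A. \<Sum>l\<in>B. f m * g l) - (\<Sum>m\<in>A. \<Sum>l\<in>B. ((-1)^m * f m) * ((-1)^l * g l))) / 2"
    by (simp add: sum_divide_distrib[symmetric] sum_subtractf)
  also have "\<dots> = ((\<Sum>m\<in>A. f m) * (\<Sum>l\<in>B. g l) - (\<Sum>m\<in>A. (-1)^m * f m) * (\<Sum>l\<in>B. (-1)^l * g l)) / 2"
    by (simp add: sum_product)
  finally show ?thesis .
qed

definition AS :: "nat \<Rightarrow> nat \<Rightarrow> nat \<Rightarrow> real" where
  "AS N a c = (\<Sum>m=1..N-1. sin (real a * real m * pi / real N) * sin (real c * real m * pi / real N))"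

lemma sin_shift: "N > 0 \<Longrightarrow> (-1)^m * sin (real a * real m * pi / real N) = sin (real (a + N) * real m * pi / real N)"
proof -
  assume N: "N > 0"
  have "real (a + N) * real m * pi / real N = real a * real m * pi / real N + real m * pi"
    using N by (simp add: field_simps)
  then show ?thesis by (simp add: sin_add)
qed

lemma conv1: "(1 - (cos t)\<^sup>2) * (chebU i (cos t) * chebU i' (cos t)) = sin (real (Suc i) * t) * sin (real (Suc i') * t)"
proof -
  have "(1 - (cos t)\<^sup>2) = sin t * sin t" using sin_cos_squared_add[of t] by (simp add: power2_eq_square algebra_simps)
  then have "(1 - (cos t)\<^sup>2) * (chebU i (cos t) * chebU i' (cos t)) = (chebU i (cos t) * sin t) * (chebU i' (cos t) * sin t)"
    by simp
  then show ?thesis by (simp only: chebU_sin)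
qed

lemma key_sum:
  assumes "even n"
  shows "(\<Sum>m=1..n+1. \<Sum>k=1..n div 2+1.
      ((1 - (MP_x n m)\<^sup>2) * (chebU i (MP_x n m) * chebU i' (MP_x n m)))
    * ((1 - (MP_y n m k)\<^sup>2) * (chebU j (MP_y n m k) * chebU j' (MP_y n m k))))
   = (AS (n+2) (Suc i) (Suc i') * AS (n+3) (Suc j) (Suc j')
      - AS (n+2) (Suc i + (n+2)) (Suc i') * AS (n+3) (Suc j + (n+3)) (Suc j')) / 2"
proof -
  define f where "f m = (1 - (MP_x n m)\<^sup>2) * (chebU i (MP_x n m) * chebU i' (MP_x n m))" for m
  define g where "g y = (1 - y\<^sup>2) * (chebU j y * chebU j' y)" for y
  define g' where "g' l = g (cos (real l * pi / real (n + 3)))" for l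
  have "(\<Sum>m=1..n+1. \<Sum>k=1..n div 2+1.
      ((1 - (MP_x n m)\<^sup>2) * (chebU i (MP_x n m) * chebU i' (MP_x n m)))
    * ((1 - (MP_y n m k)\<^sup>2) * (chebU j (MP_y n m k) * chebU j' (MP_y n m k))))
    = (\<Sum>m=1..n+1. \<Sum>k=1..n div 2+1. f m * g (MP_y n m k))"
    by (simp add: f_def g_def)
  also have "\<dots> = (\<Sum>m=1..n+1. \<Sum>l=1..n+2. if odd (m + l) then f m * g' l else 0)"
    unfolding g'_def by (rule MP_reindex[OF assms])
  also have "\<dots> = ((\<Sum>m=1..n+1. f m) * (\<Sum>l=1..n+2. g' l) - (\<Sum>m=1..n+1. (-1)^m * f m) * (\<Sum>l=1..n+2. (-1)^l * g' l)) / 2"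
    by (rule parity_split)
  also have "(\<Sum>m=1..n+1. f m) = AS (n+2) (Suc i) (Suc i')"
    unfolding AS_def
  proof (rule sum.cong)
    show "{1..n+1} = {1..n+2-1}" by simp
  next
    fix m assume "m \<in> {1..n + 2 - 1}"
    show "f m = sin (real (Suc i) * real m * pi / real (n + 2)) * sin (real (Suc i') * real m * pi / real (n + 2))"
      unfolding f_def MP_x_def conv1 by (simp add: mult.assoc add.commute)
  qed
  also have "(\<Sum>m=1..n+1. (-1)^m * f m) = AS (n+2) (Suc i + (n+2)) (Suc i')"
    unfolding AS_def
  proof (rule sum.cong)
    show "{1..n+1} = {1..n+2-1}" by simp
  next
    fix m assume "m \<in> {1..n + 2 - 1}"
    have "(-1)^m * f m = ((-1)^m * sin (real (Suc i) * real m * pi / real (n + 2))) * sin (real (Suc i') * real m * pi / real (n + 2))"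
      unfolding f_def MP_x_def conv1 by (simp add: mult.assoc add.commute)
    then show "(-1)^m * f m = sin (real (Suc i + (n+2)) * real m * pi / real (n + 2)) * sin (real (Suc i') * real m * pi / real (n + 2))"
      using sin_shift[of "n+2" m "Suc i"] by simp
  qed
  also have "(\<Sum>l=1..n+2. g' l) = AS (n+3) (Suc j) (Suc j')"
    unfolding AS_def
  proof (rule sum.cong)
    show "{1..n+2} = {1..n+3-1}" by simp
  next
    fix l assume "l \<in> {1..n + 3 - 1}"
    show "g' l = sin (real (Suc j) * real l * pi / real (n + 3)) * sin (real (Suc j') * real l * pi / real (n + 3))"
      unfolding g'_def g_def conv1 by (simp add: mult.assoc)
  qed
  also have "(\<Sum>l=1..n+2. (-1)^l * g' l) = AS (n+3) (Suc j + (n+3)) (Suc j')"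
    unfolding AS_def
  proof (rule sum.cong)
    show "{1..n+2} = {1..n+3-1}" by simp
  next
    fix l assume "l \<in> {1..n + 3 - 1}"
    have "(-1)^l * g' l = ((-1)^l * sin (real (Suc j) * real l * pi / real (n + 3))) * sin (real (Suc j') * real l * pi / real (n + 3))"
      unfolding g'_def g_def conv1 by (simp add: mult.assoc)
    then show "(-1)^l * g' l = sin (real (Suc j + (n+3)) * real l * pi / real (n + 3)) * sin (real (Suc j') * real l * pi / real (n + 3))"
      using sin_shift[of "n+3" l "Suc j"] by simp
  qed
  finally show ?thesis .
qed



lemma dvd_small: "(k::int) dvd z \<Longrightarrow> \<bar>z\<bar> < k \<Longrightarrow> z = 0"
proof (rule ccontr)
  assume a: "k dvd z" "\<bar>z\<bar> < k" "z \<noteq> 0"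
  then have "\<bar>k\<bar> \<le> \<bar>z\<bar>" using dvd_imp_le_int by blast
  then show False using a by linarith
qed

lemma dvd_mid: "(k::int) dvd z \<Longrightarrow> 0 < z \<Longrightarrow> z < 2 * k \<Longrightarrow> z = k"
proof -
  assume a: "k dvd z" "0 < z" "z < 2 * k"
  then have "k dvd (z - k)" by (simp add: dvd_diff)
  moreover have "\<bar>z - k\<bar> < k" using a by arith
  ultimately have "z - k = 0" by (rule dvd_small)
  then show "z = k" by simp
qed

lemma AS_val: "1 \<le> N \<Longrightarrow> AS N a c = (if (2 * int N) dvd (int a - int c) then real N / 2 else 0)
      - (if (2 * int N) dvd (int a + int c) then real N / 2 else 0)"
  unfolding AS_def by (rule Asum)

lemma AS_same: assumes "1 \<le> N" "0 < a" "a < N" "0 < c" "c < N"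
  shows "AS N a c = (if a = c then real N / 2 else 0)"
proof -
  have 1: "(2 * int N) dvd (int a - int c) \<longleftrightarrow> a = c"
    using dvd_small[of "2 * int N" "int a - int c"] assms by auto
  have 2: "\<not> (2 * int N) dvd (int a + int c)"
    using dvd_small[of "2 * int N" "int a + int c"] assms by auto
  show ?thesis unfolding AS_val[OF assms(1)] using 1 2 by simp
qed

lemma AS_shift: assumes "1 \<le> N" "0 < a" "a < N" "0 < c" "c < N"
  shows "AS N (a + N) c = (if a + c = N then - (real N / 2) else 0)"
proof -
  have 1: "\<not> (2 * int N) dvd (int (a + N) - int c)"
  proof
    assume "(2 * int N) dvd (int (a + N) - int c)"
    from dvd_mid[OF this] have "int (a + N) - int c = 2 * int N" using assms by simp
    then show False using assms by simp
  qed
  have 2: "(2 * int N) dvd (int (a + N) + int c) \<longleftrightarrow> a + c = N"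
  proof
    assume "(2 * int N) dvd (int (a + N) + int c)"
    from dvd_mid[OF this] have "int (a + N) + int c = 2 * int N" using assms by simp
    then show "a + c = N" by simp
  next
    assume "a + c = N"
    then have "int (a + N) + int c = 2 * int N" by simp
    then show "(2 * int N) dvd (int (a + N) + int c)" by (metis dvd_refl)
  qed
  show ?thesis unfolding AS_val[OF assms(1)] using 1 2 by simp
qed

lemma AS_one: assumes "1 \<le> N" "0 < c" "c + 1 < 2 * N"
  shows "AS N 1 c = (if c = 1 then real N / 2 else 0)"
proof -
  have 1: "(2 * int N) dvd (int 1 - int c) \<longleftrightarrow> c = 1"
    using dvd_small[of "2 * int N" "int 1 - int c"] assms by auto
  have 2: "\<not> (2 * int N) dvd (int 1 + int c)"
    using dvd_small[of "2 * int N" "int 1 + int c"] assms by auto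
  show ?thesis unfolding AS_val[OF assms(1)] using 1 2 by simp
qed

lemma AS_one_shift: assumes "1 \<le> N" "0 < c" "c + 1 < 2 * N" "AS N (1 + N) c \<noteq> 0"
  shows "N \<le> c + 1"
proof (rule ccontr)
  assume c: "\<not> N \<le> c + 1"
  have 1: "\<not> (2 * int N) dvd (int (1 + N) - int c)"
  proof
    assume "(2 * int N) dvd (int (1 + N) - int c)"
    from dvd_mid[OF this] have "int (1 + N) - int c = 2 * int N" using assms c by simp
    then show False using assms by simp
  qed
  have 2: "\<not> (2 * int N) dvd (int (1 + N) + int c)"
  proof
    assume "(2 * int N) dvd (int (1 + N) + int c)"
    from dvd_mid[OF this] have "int (1 + N) + int c = 2 * int N" using assms c by simp
    then show False using c by simp
  qed
  have "AS N (1 + N) c = 0" unfolding AS_val[OF assms(1)] using 1 2 by simp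
  then show False using assms(4) by simp
qed

lemma disc_orth:
  assumes "even n" "i + j \<le> n" "i' + j' \<le> n"
  shows "Cn n * (\<Sum>m=1..n+1. \<Sum>k=1..n div 2+1.
      (1 - (MP_x n m)\<^sup>2) * (1 - (MP_y n m k)\<^sup>2)
      * (chebU i (MP_x n m) * chebU j (MP_y n m k)) * (chebU i' (MP_x n m) * chebU j' (MP_y n m k)))
    = (if i = i' \<and> j = j' then 1 else 0)"
proof -
  have "(\<Sum>m=1..n+1. \<Sum>k=1..n div 2+1.
      (1 - (MP_x n m)\<^sup>2) * (1 - (MP_y n m k)\<^sup>2)
      * (chebU i (MP_x n m) * chebU j (MP_y n m k)) * (chebU i' (MP_x n m) * chebU j' (MP_y n m k)))
    = (\<Sum>m=1..n+1. \<Sum>k=1..n div 2+1.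
      ((1 - (MP_x n m)\<^sup>2) * (chebU i (MP_x n m) * chebU i' (MP_x n m)))
    * ((1 - (MP_y n m k)\<^sup>2) * (chebU j (MP_y n m k) * chebU j' (MP_y n m k))))"
    by (intro sum.cong refl) (simp only: ac_simps)
  also have "\<dots> = (AS (n+2) (Suc i) (Suc i') * AS (n+3) (Suc j) (Suc j')
      - AS (n+2) (Suc i + (n+2)) (Suc i') * AS (n+3) (Suc j + (n+3)) (Suc j')) / 2"
    by (rule key_sum[OF assms(1)])
  also have "AS (n+2) (Suc i) (Suc i') = (if i = i' then real (n+2) / 2 else 0)"
    using AS_same[of "n+2" "Suc i" "Suc i'"] assms by simp
  also have "AS (n+3) (Suc j) (Suc j') = (if j = j' then real (n+3) / 2 else 0)"
    using AS_same[of "n+3" "Suc j" "Suc j'"] assms by simp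
  also have "AS (n+2) (Suc i + (n+2)) (Suc i') * AS (n+3) (Suc j + (n+3)) (Suc j') = 0"
    using AS_shift[of "n+2" "Suc i" "Suc i'"] AS_shift[of "n+3" "Suc j" "Suc j'"] assms by auto
  also have "((if i = i' then real (n+2) / 2 else 0) * (if j = j' then real (n+3) / 2 else 0) - 0) / 2
     = (if i = i' \<and> j = j' then real (n+2) * real (n+3) / 8 else 0)" by auto
  finally have S: "(\<Sum>m=1..n+1. \<Sum>k=1..n div 2+1.
      (1 - (MP_x n m)\<^sup>2) * (1 - (MP_y n m k)\<^sup>2)
      * (chebU i (MP_x n m) * chebU j (MP_y n m k)) * (chebU i' (MP_x n m) * chebU j' (MP_y n m k)))
    = (if i = i' \<and> j = j' then real (n+2) * real (n+3) / 8 else 0)" .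
  have pos: "(real n + 2) * (real n + 3) > 0" by simp
  show ?thesis unfolding S Cn_def using pos by (auto simp: field_simps)
qed

lemma disc_quad:
  assumes "even n" "i + j \<le> 2 * n"
  shows "Cn n * (\<Sum>m=1..n+1. \<Sum>k=1..n div 2+1.
      (1 - (MP_x n m)\<^sup>2) * (1 - (MP_y n m k)\<^sup>2) * (chebU i (MP_x n m) * chebU j (MP_y n m k)))
    = (if i = 0 \<and> j = 0 then 1 else 0)"
proof -
  have "(\<Sum>m=1..n+1. \<Sum>k=1..n div 2+1.
      (1 - (MP_x n m)\<^sup>2) * (1 - (MP_y n m k)\<^sup>2) * (chebU i (MP_x n m) * chebU j (MP_y n m k)))
    = (\<Sum>m=1..n+1. \<Sum>k=1..n div 2+1.
      ((1 - (MP_x n m)\<^sup>2) * (chebU 0 (MP_x n m) * chebU i (MP_x n m)))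
    * ((1 - (MP_y n m k)\<^sup>2) * (chebU 0 (MP_y n m k) * chebU j (MP_y n m k))))"
    by (intro sum.cong refl) (simp only: chebU.simps ac_simps mult_1_left)
  also have "\<dots> = (AS (n+2) (Suc 0) (Suc i) * AS (n+3) (Suc 0) (Suc j)
      - AS (n+2) (Suc 0 + (n+2)) (Suc i) * AS (n+3) (Suc 0 + (n+3)) (Suc j)) / 2"
    by (rule key_sum[OF assms(1)])
  also have "AS (n+2) (Suc 0) (Suc i) = (if i = 0 then real (n+2) / 2 else 0)"
    using AS_one[of "n+2" "Suc i"] assms by simp
  also have "AS (n+3) (Suc 0) (Suc j) = (if j = 0 then real (n+3) / 2 else 0)"
    using AS_one[of "n+3" "Suc j"] assms by simp
  also have "AS (n+2) (Suc 0 + (n+2)) (Suc i) * AS (n+3) (Suc 0 + (n+3)) (Suc j) = 0"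
  proof (rule ccontr)
    assume "AS (n+2) (Suc 0 + (n+2)) (Suc i) * AS (n+3) (Suc 0 + (n+3)) (Suc j) \<noteq> 0"
    then have a: "AS (n+2) (1 + (n+2)) (Suc i) \<noteq> 0" "AS (n+3) (1 + (n+3)) (Suc j) \<noteq> 0" by auto
    have "n + 2 \<le> Suc i + 1" by (rule AS_one_shift[OF _ _ _ a(1)]) (use assms in auto)
    moreover have "n + 3 \<le> Suc j + 1" by (rule AS_one_shift[OF _ _ _ a(2)]) (use assms in auto)
    ultimately show False using assms by simp
  qed
  also have "((if i = 0 then real (n+2) / 2 else 0) * (if j = 0 then real (n+3) / 2 else 0) - 0) / 2
     = (if i = 0 \<and> j = 0 then real (n+2) * real (n+3) / 8 else 0)" by auto
  finally have S: "(\<Sum>m=1..n+1. \<Sum>k=1..n div 2+1.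
      (1 - (MP_x n m)\<^sup>2) * (1 - (MP_y n m k)\<^sup>2) * (chebU i (MP_x n m) * chebU j (MP_y n m k)))
    = (if i = 0 \<and> j = 0 then real (n+2) * real (n+3) / 8 else 0)" .
  have pos: "(real n + 2) * (real n + 3) > 0" by simp
  show ?thesis unfolding S Cn_def using pos by (auto simp: field_simps)
qed



lemma left_right_inverse_sum:
  fixes P :: "'b \<Rightarrow> 's \<Rightarrow> real" and Q :: "'s \<Rightarrow> 'b \<Rightarrow> real"
  assumes fB: "finite B" and fS: "finite S" and card: "card B = card S"
   and orth: "\<And>a b. a \<in> B \<Longrightarrow> b \<in> B \<Longrightarrow> (\<Sum>s\<in>S. P a s * Q s b) = (if a = b then 1 else 0)"
   and s: "s \<in> S" and t: "t \<in> S"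
  shows "(\<Sum>a\<in>B. Q s a * P a t) = (if s = t then 1 else 0)"
proof -
  define N where "N = card B"
  obtain hB where hB: "bij_betw hB {0..<N} B" using ex_bij_betw_nat_finite[OF fB] N_def by blast
  obtain hS where hS: "bij_betw hS {0..<N} S" using ex_bij_betw_nat_finite[OF fS] N_def card by auto
  define A where "A = Matrix.mat N N (\<lambda>(i,j). P (hB i) (hS j))"
  define C where "C = Matrix.mat N N (\<lambda>(i,j). Q (hS i) (hB j))"
  have AC: "A * C = 1\<^sub>m N"
  proof (rule eq_matI)
    fix i j assume i: "i < dim_row (1\<^sub>m N :: real Matrix.mat)" and j: "j < dim_col (1\<^sub>m N :: real Matrix.mat)"
    then have i': "i < N" and j': "j < N" by auto
    have "(A * C) $$ (i, j) = (\<Sum>k\<in>{0..<N}. P (hB i) (hS k) * Q (hS k) (hB j))"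
      using i' j' by (simp add: A_def C_def scalar_prod_def)
    also have "\<dots> = (\<Sum>s\<in>S. P (hB i) s * Q s (hB j))"
      by (rule sum.reindex_bij_betw[OF hS])
    also have "\<dots> = (if hB i = hB j then 1 else 0)"
      by (rule orth) (use i' j' bij_betwE[OF hB] in auto)
    also have "(hB i = hB j) = (i = j)"
      using bij_betw_imp_inj_on[OF hB] i' j' by (auto simp: inj_on_def)
    finally show "(A * C) $$ (i, j) = 1\<^sub>m N $$ (i, j)" using i' j' by simp
  qed (simp_all add: A_def C_def)
  have CA: "C * A = 1\<^sub>m N"
    by (rule mat_mult_left_right_inverse[OF _ _ AC]) (simp_all add: A_def C_def)
  obtain i where i: "i < N" "hS i = s" using s hS by (metis atLeastLessThan_iff bij_betw_iff_bijections)
  obtain j where j: "j < N" "hS j = t" using t hS by (metis atLeastLessThan_iff bij_betw_iff_bijections)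
  have "(\<Sum>a\<in>B. Q s a * P a t) = (\<Sum>k\<in>{0..<N}. Q (hS i) (hB k) * P (hB k) (hS j))"
    unfolding i(2) j(2) by (rule sum.reindex_bij_betw[OF hB, symmetric])
  also have "\<dots> = (C * A) $$ (i, j)"
    using i j by (simp add: A_def C_def scalar_prod_def)
  also have "\<dots> = (if i = j then 1 else 0)" unfolding CA using i j by simp
  also have "(i = j) = (s = t)"
    using bij_betw_imp_inj_on[OF hS] i j by (auto simp: inj_on_def)
  finally show ?thesis .
qed



definition Bidx :: "nat \<Rightarrow> (nat \<times> nat) set" where
  "Bidx n = (SIGMA i:{..n}. {..n - i})"

definition phi :: "nat \<times> nat \<Rightarrow> real \<times> real \<Rightarrow> real" where
  "phi a z = chebU (fst a) (fst z) * chebU (snd a) (snd z)"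

definition W :: "nat \<Rightarrow> nat \<times> nat \<Rightarrow> real" where
  "W n s = Cn n * (1 - (fst (MP_node n s))\<^sup>2) * (1 - (snd (MP_node n s))\<^sup>2)"

lemma finite_Bidx[simp]: "finite (Bidx n)" by (simp add: Bidx_def)
lemma finite_MP_idx[simp]: "finite (MP_idx n)" by (simp add: MP_idx_def)

lemma sum_Sigma_fun: "(\<Sum>i\<le>(n::nat). \<Sum>j\<le>n - i. g i j) = (\<Sum>b\<in>(SIGMA i:{..n}. {..n - i}). g (fst b) (snd b))"
proof -
  have "(\<Sum>i\<le>n. \<Sum>j\<le>n - i. g i j) = (\<Sum>(i,j)\<in>(SIGMA i:{..n}. {..n - i}). g i j)"
    by (rule sum.Sigma) auto
  also have "\<dots> = (\<Sum>b\<in>(SIGMA i:{..n}. {..n - i}). g (fst b) (snd b))"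
    by (simp add: case_prod_beta)
  finally show ?thesis .
qed

lemma Kn_sum: "Kn n a z = (\<Sum>b\<in>Bidx n. phi b a * phi b z)"
  unfolding Kn_def Bidx_def phi_def sum_Sigma_fun by (simp add: ac_simps)

lemma Kn_sym: "Kn n a z = Kn n z a"
  unfolding Kn_sum by (simp add: ac_simps)

lemma tri_sum: "2 * (\<Sum>i\<le>n. n - i + 1) = (n + 1) * ((n::nat) + 2)"
proof (induction n)
  case 0 then show ?case by simp
next
  case (Suc n)
  have "(\<Sum>i\<le>Suc n. Suc n - i + 1) = (\<Sum>i\<le>n. Suc n - i + 1) + 1" by simp
  also have "(\<Sum>i\<le>n. Suc n - i + 1) = (\<Sum>i\<le>n. (n - i + 1) + 1)"
    by (rule sum.cong) (auto simp: Suc_diff_le)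
  also have "\<dots> = (\<Sum>i\<le>n. n - i + 1) + (\<Sum>i\<le>n. 1)" by (rule sum.distrib)
  also have "\<dots> = (\<Sum>i\<le>n. n - i + 1) + (n + 1)" by simp
  finally have "2 * (\<Sum>i\<le>Suc n. Suc n - i + 1) = 2 * (\<Sum>i\<le>n. n - i + 1) + 2 * (n + 2)" by simp
  then show ?case using Suc by simp
qed

lemma card_eq: assumes "even n" shows "card (Bidx n) = card (MP_idx n)"
proof -
  have "card (Bidx n) = (\<Sum>i\<le>n. n - i + 1)" unfolding Bidx_def by simp
  moreover have "card (MP_idx n) = (n + 1) * (n div 2 + 1)" unfolding MP_idx_def by (simp add: card_cartesian_product)
  moreover obtain r where "n = 2 * r" using assms by (auto elim: evenE)
  ultimately show ?thesis using tri_sum[of n] by simp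
qed

lemma orth_S:
  assumes "even n" "a \<in> Bidx n" "b \<in> Bidx n"
  shows "(\<Sum>s\<in>MP_idx n. (W n s * phi a (MP_node n s)) * phi b (MP_node n s)) = (if a = b then 1 else 0)"
proof -
  obtain i j where a: "a = (i, j)" "i + j \<le> n" using assms(2) unfolding Bidx_def by auto
  obtain i' j' where b: "b = (i', j')" "i' + j' \<le> n" using assms(3) unfolding Bidx_def by auto
  have "(\<Sum>s\<in>MP_idx n. (W n s * phi a (MP_node n s)) * phi b (MP_node n s))
    = Cn n * (\<Sum>m=1..n+1. \<Sum>k=1..n div 2+1.
      (1 - (MP_x n m)\<^sup>2) * (1 - (MP_y n m k)\<^sup>2)
      * (chebU i (MP_x n m) * chebU j (MP_y n m k)) * (chebU i' (MP_x n m) * chebU j' (MP_y n m k)))"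
    unfolding MP_idx_def sum.cartesian_product sum_distrib_left
    by (rule sum.cong[OF refl]) (auto simp: W_def phi_def MP_node_def a b ac_simps)
  also have "\<dots> = (if i = i' \<and> j = j' then 1 else 0)"
    by (rule disc_orth[OF assms(1) a(2) b(2)])
  finally show ?thesis using a b by simp
qed

lemma lagrange_key:
  assumes "even n" "s \<in> MP_idx n" "t \<in> MP_idx n"
  shows "W n t * Kn n (MP_node n t) (MP_node n s) = (if s = t then 1 else 0)"
proof -
  have "(\<Sum>a\<in>Bidx n. phi a (MP_node n s) * (W n t * phi a (MP_node n t))) = (if s = t then 1 else 0)"
    by (rule left_right_inverse_sum[where P="\<lambda>a t. W n t * phi a (MP_node n t)" and Q="\<lambda>s a. phi a (MP_node n s)"])
       (use assms card_eq orth_S in auto)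
  moreover have "(\<Sum>a\<in>Bidx n. phi a (MP_node n s) * (W n t * phi a (MP_node n t))) = W n t * Kn n (MP_node n t) (MP_node n s)"
    unfolding Kn_sum sum_distrib_left by (rule sum.cong) (auto simp: ac_simps)
  ultimately show ?thesis by simp
qed

lemma Ln_alt: "Ln n f z = (\<Sum>t\<in>MP_idx n. W n t * f (MP_node n t) * Kn n (MP_node n t) z)"
  unfolding Ln_def W_def sum_distrib_left by (rule sum.cong) (auto simp: ac_simps)

lemma Ln_interp:
  assumes "even n" "s \<in> MP_idx n"
  shows "Ln n f (MP_node n s) = f (MP_node n s)"
proof -
  have "Ln n f (MP_node n s) = (\<Sum>t\<in>MP_idx n. f (MP_node n t) * (W n t * Kn n (MP_node n t) (MP_node n s)))"
    unfolding Ln_alt by (rule sum.cong) (auto simp: ac_simps)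
  also have "\<dots> = (\<Sum>t\<in>MP_idx n. if t = s then f (MP_node n s) else 0)"
    by (rule sum.cong) (use lagrange_key[OF assms(1) assms(2)] in auto)
  also have "\<dots> = f (MP_node n s)" using assms(2) by simp
  finally show ?thesis .
qed

lemma Kn_poly: "Kn n a \<in> poly2 n"
  unfolding poly2_chebU Kn_def
  by (rule span2I[where c="\<lambda>i j. chebU i (fst a) * chebU j (snd a)"]) (simp add: ac_simps)

lemma Ln_poly: "Ln n f \<in> poly2 n"
proof -
  have "(\<lambda>z. \<Sum>t\<in>MP_idx n. W n t * f (MP_node n t) * Kn n (MP_node n t) z) \<in> span2 chebU n"
    by (rule span2_sum, simp, rule span2_smult) (use Kn_poly poly2_chebU in auto)
  moreover have "(\<lambda>z. \<Sum>t\<in>MP_idx n. W n t * f (MP_node n t) * Kn n (MP_node n t) z) = Ln n f"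
    by (rule ext) (simp add: Ln_alt)
  ultimately show ?thesis unfolding poly2_chebU by simp
qed

lemma reproduce:
  assumes "even n" "p \<in> poly2 n"
  shows "p z = (\<Sum>t\<in>MP_idx n. W n t * p (MP_node n t) * Kn n (MP_node n t) z)"
proof -
  obtain c where c: "\<And>x y. p (x, y) = (\<Sum>i\<le>n. \<Sum>j\<le>n - i. c i j * chebU i x * chebU j y)"
    using assms(2) unfolding poly2_chebU span2_def by blast
  have pc: "p w = (\<Sum>b\<in>Bidx n. c (fst b) (snd b) * phi b w)" for w
  proof -
    obtain x y where w: "w = (x, y)" by fastforce
    show ?thesis unfolding w c Bidx_def phi_def sum_Sigma_fun by (simp add: ac_simps)
  qed
  let ?S = "MP_idx n" and ?B = "Bidx n"
  let ?nd = "MP_node n"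
  have "(\<Sum>t\<in>?S. W n t * p (?nd t) * Kn n (?nd t) z)
     = (\<Sum>t\<in>?S. \<Sum>b\<in>?B. \<Sum>a\<in>?B. (c (fst b) (snd b) * phi a z) * ((W n t * phi b (?nd t)) * phi a (?nd t)))"
  proof (rule sum.cong[OF refl])
    fix t
    show "W n t * p (?nd t) * Kn n (?nd t) z = (\<Sum>b\<in>?B. \<Sum>a\<in>?B. (c (fst b) (snd b) * phi a z) * ((W n t * phi b (?nd t)) * phi a (?nd t)))"
    proof -
      have "p (?nd t) * Kn n (?nd t) z = (\<Sum>b\<in>?B. \<Sum>a\<in>?B. (c (fst b) (snd b) * phi b (?nd t)) * (phi a (?nd t) * phi a z))"
        by (simp only: pc Kn_sum sum_product)
      then have "W n t * p (?nd t) * Kn n (?nd t) z = W n t * (\<Sum>b\<in>?B. \<Sum>a\<in>?B. (c (fst b) (snd b) * phi b (?nd t)) * (phi a (?nd t) * phi a z))"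
        by (simp only: mult.assoc)
      also have "\<dots> = (\<Sum>b\<in>?B. \<Sum>a\<in>?B. W n t * ((c (fst b) (snd b) * phi b (?nd t)) * (phi a (?nd t) * phi a z)))"
        by (simp only: sum_distrib_left)
      also have "\<dots> = (\<Sum>b\<in>?B. \<Sum>a\<in>?B. (c (fst b) (snd b) * phi a z) * ((W n t * phi b (?nd t)) * phi a (?nd t)))"
        by (intro sum.cong refl) (simp only: ac_simps)
      finally show ?thesis .
    qed
  qed
  also have "\<dots> = (\<Sum>b\<in>?B. \<Sum>a\<in>?B. \<Sum>t\<in>?S. (c (fst b) (snd b) * phi a z) * ((W n t * phi b (?nd t)) * phi a (?nd t)))"
    by (subst sum.swap, rule sum.cong[OF refl], subst sum.swap, rule refl)
  also have "\<dots> = (\<Sum>b\<in>?B. \<Sum>a\<in>?B. (c (fst b) (snd b) * phi a z) * (if b = a then 1 else 0))"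
    unfolding sum_distrib_left[symmetric]
    by (intro sum.cong refl) (simp add: orth_S[OF assms(1)])
  also have "\<dots> = (\<Sum>b\<in>?B. c (fst b) (snd b) * phi b z)"
  proof (rule sum.cong[OF refl])
    fix b assume "b \<in> ?B"
    have "(\<Sum>a\<in>?B. (c (fst b) (snd b) * phi a z) * (if b = a then 1 else 0)) = (\<Sum>a\<in>?B. if b = a then c (fst b) (snd b) * phi a z else 0)"
      by (rule sum.cong) auto
    then show "(\<Sum>a\<in>?B. (c (fst b) (snd b) * phi a z) * (if b = a then 1 else 0)) = c (fst b) (snd b) * phi b z"
      using \<open>b \<in> ?B\<close> by simp
  qed
  also have "\<dots> = p z" by (simp add: pc)
  finally show ?thesis by simp
qed



lemma chebU_cont2: "continuous_on S (chebU i) \<and> continuous_on S (chebU (Suc i))"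
proof (induction i)
  case 0
  have "chebU 0 = (\<lambda>x. 1)" "chebU (Suc 0) = (\<lambda>x. 2 * x)" by (auto simp: fun_eq_iff)
  then show ?case by (auto intro!: continuous_intros)
next
  case (Suc i)
  have e: "chebU (Suc (Suc i)) = (\<lambda>x. 2 * x * chebU (Suc i) x - chebU i x)" by (rule ext) simp
  have "continuous_on S (\<lambda>x. 2 * x * chebU (Suc i) x - chebU i x)"
    using Suc by (intro continuous_intros) auto
  then show ?case using Suc e by simp
qed

lemma chebU_cont: "continuous_on S (chebU i)"
  using chebU_cont2 by blast

lemma chebU_cont_comp [continuous_intros]: "continuous_on S f \<Longrightarrow> continuous_on S (\<lambda>x. chebU i (f x))"
  using continuous_on_compose[of S f "chebU i"] chebU_cont[of "f ` S" i] by (simp add: comp_def)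

definition Gf :: "nat \<Rightarrow> real \<Rightarrow> real" where
  "Gf i t = sin (real (i + 2) * t) / (2 * real (i + 2)) - (if i = 0 then t / 2 else sin (real i * t) / (2 * real i))"

lemma Gf_deriv: "(Gf i has_real_derivative (cos (real (i + 2) * t) - cos (real i * t)) / 2) (at t)"
proof (cases "i = 0")
  case True
  have "((\<lambda>t. sin (real (i + 2) * t) / (2 * real (i + 2)) - t / 2) has_real_derivative
        cos (real (i + 2) * t) * real (i + 2) / (2 * real (i + 2)) - 1 / 2) (at t)"
    by (auto intro!: derivative_eq_intros)
  then show ?thesis using True unfolding Gf_def by (simp add: field_simps)
next
  case False
  have d: "((\<lambda>t. sin (real (i + 2) * t) / (2 * real (i + 2)) - sin (real i * t) / (2 * real i)) has_real_derivative
        cos (real (i + 2) * t) * real (i + 2) / (2 * real (i + 2)) - cos (real i * t) * real i / (2 * real i)) (at t)"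
    by (auto intro!: derivative_eq_intros)
  have e: "cos (real (i + 2) * t) * real (i + 2) / (2 * real (i + 2)) - cos (real i * t) * real i / (2 * real i)
      = (cos (real (i + 2) * t) - cos (real i * t)) / 2" using False by (simp add: field_simps)
  have g: "Gf i = (\<lambda>t. sin (real (i + 2) * t) / (2 * real (i + 2)) - sin (real i * t) / (2 * real i))"
    using False by (simp add: Gf_def fun_eq_iff)
  show ?thesis unfolding g e[symmetric] by (rule d)
qed

lemma Gf_cont: "continuous_on S (Gf i)"
proof (cases "i = 0")
  case True
  then have "Gf i = (\<lambda>t. sin (real (i + 2) * t) / (2 * real (i + 2)) - t / 2)" by (simp add: Gf_def fun_eq_iff)
  then show ?thesis by (simp add: continuous_intros)
next
  case False
  then have "Gf i = (\<lambda>t. sin (real (i + 2) * t) / (2 * real (i + 2)) - sin (real i * t) / (2 * real i))" by (simp add: Gf_def fun_eq_iff)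
  then show ?thesis using False by (auto intro!: continuous_intros)
qed

lemma F_deriv:
  assumes x: "-1 < x" "x < 1"
  shows "((\<lambda>x. Gf i (arccos x)) has_real_derivative chebU i x * sqrt (1 - x\<^sup>2)) (at x)"
proof -
  let ?t = "arccos x"
  have d: "((\<lambda>x. Gf i (arccos x)) has_real_derivative
      ((cos (real (i + 2) * ?t) - cos (real i * ?t)) / 2) * inverse (- sqrt (1 - x\<^sup>2))) (at x)"
    by (rule DERIV_chain2[OF Gf_deriv DERIV_arccos[OF x]])
  have s: "sin ?t = sqrt (1 - x\<^sup>2)" using x by (simp add: sin_arccos)
  have sp: "sqrt (1 - x\<^sup>2) > 0" using x by (simp add: abs_square_less_1)
  have "(cos (real (i + 2) * ?t) - cos (real i * ?t)) / 2 = - (sin (real (Suc i) * ?t) * sin ?t)"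
  proof -
    have "sin (real (Suc i) * ?t) * sin ?t = (cos (real (Suc i) * ?t - ?t) - cos (real (Suc i) * ?t + ?t)) / 2"
      by (rule sin_times_sin)
    also have "real (Suc i) * ?t - ?t = real i * ?t" by (simp add: algebra_simps)
    also have "real (Suc i) * ?t + ?t = real (i + 2) * ?t" by (simp add: algebra_simps)
    finally show ?thesis by simp
  qed
  also have "sin (real (Suc i) * ?t) = chebU i x * sin ?t"
    using chebU_sin[of i ?t] x by simp
  finally have "((cos (real (i + 2) * ?t) - cos (real i * ?t)) / 2) * inverse (- sqrt (1 - x\<^sup>2)) = chebU i x * sqrt (1 - x\<^sup>2)"
    using s sp by (simp add: field_simps power2_eq_square)
  then show ?thesis using d by simp
qed

lemma I1:
  "((\<lambda>x. chebU i x * sqrt (1 - x\<^sup>2)) has_integral (if i = 0 then pi / 2 else 0)) {-1..1}"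
proof -
  have "((\<lambda>x. chebU i x * sqrt (1 - x\<^sup>2)) has_integral (Gf i (arccos 1) - Gf i (arccos (-1)))) {-1..1}"
  proof (rule fundamental_theorem_of_calculus_interior)
    show "continuous_on {-1..1} (\<lambda>x. Gf i (arccos x))"
      using continuous_on_compose[of "{-1..1}" arccos "Gf i"] continuous_on_arccos' Gf_cont
      by (simp add: comp_def)
  next
    fix x :: real assume "x \<in> {-1<..<1}"
    then show "((\<lambda>x. Gf i (arccos x)) has_vector_derivative chebU i x * sqrt (1 - x\<^sup>2)) (at x)"
      using F_deriv[of x i] by (simp add: has_real_derivative_iff_has_vector_derivative)
  qed simp
  moreover have "Gf i (arccos 1) - Gf i (arccos (-1)) = (if i = 0 then pi / 2 else 0)"
  proof -
    have "sin (real (i + 2) * pi) = 0" by (rule sin_npi)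
    moreover have "sin (real i * pi) = 0" by (rule sin_npi)
    ultimately show ?thesis unfolding Gf_def by auto
  qed
  ultimately show ?thesis by simp
qed

lemma I2:
  "integral Q (\<lambda>(x, y). (chebU i x * chebU j y) * sqrt (1 - x\<^sup>2) * sqrt (1 - y\<^sup>2))
    = (if i = 0 then pi / 2 else 0) * (if j = 0 then pi / 2 else 0)"
proof -
  let ?f = "\<lambda>x. chebU i x * sqrt (1 - x\<^sup>2)" and ?g = "\<lambda>y. chebU j y * sqrt (1 - y\<^sup>2)"
  have eq: "(\<lambda>(x, y). (chebU i x * chebU j y) * sqrt (1 - x\<^sup>2) * sqrt (1 - y\<^sup>2)) = (\<lambda>z. ?f (fst z) * ?g (snd z))"
    by (auto simp: fun_eq_iff ac_simps)
  have cont: "continuous_on (cbox (-1, -1) (1, 1)) (\<lambda>z::real\<times>real. ?f (fst z) * ?g (snd z))"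
    by (intro continuous_intros)
  have "integral Q (\<lambda>z. ?f (fst z) * ?g (snd z))
      = integral (cbox (-1) 1) (\<lambda>x. integral (cbox (-1) 1) (\<lambda>y. ?f x * ?g y))"
    unfolding Q_def using integral_prod_continuous[OF cont] by simp
  also have "\<dots> = integral {-1..1} (\<lambda>x. ?f x * integral {-1..1} ?g)"
    by (simp add: cbox_interval)
  also have "\<dots> = integral {-1..1} ?f * integral {-1..1} ?g"
    by simp
  also have "\<dots> = (if i = 0 then pi / 2 else 0) * (if j = 0 then pi / 2 else 0)"
    using I1[of i] I1[of j] by (simp add: integral_unique)
  finally show ?thesis unfolding eq .
qed



lemma part_i:
  assumes "even n" "p \<in> poly2 (2 * n)"
  shows "4 / pi\<^sup>2 * integral Q (\<lambda>(x, y). p (x, y) * sqrt (1 - x\<^sup>2) * sqrt (1 - y\<^sup>2))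
       = Cn n * (\<Sum>m = 1..n+1. \<Sum>k = 1..n div 2 + 1.
            (1 - (MP_x n m)\<^sup>2) * (1 - (MP_y n m k)\<^sup>2) * p (MP_x n m, MP_y n m k))"
proof -
  let ?B = "Bidx (2 * n)"
  obtain c where c: "\<And>x y. p (x, y) = (\<Sum>i\<le>2*n. \<Sum>j\<le>2*n - i. c i j * chebU i x * chebU j y)"
    using assms(2) unfolding poly2_chebU span2_def by blast
  have pc: "p w = (\<Sum>b\<in>?B. c (fst b) (snd b) * phi b w)" for w
  proof -
    obtain x y where w: "w = (x, y)" by fastforce
    show ?thesis unfolding w c Bidx_def phi_def sum_Sigma_fun by (simp add: ac_simps)
  qed
  define h where "h b z = phi b z * sqrt (1 - (fst z)\<^sup>2) * sqrt (1 - (snd z)\<^sup>2)" for b z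
  have hI: "integral Q (h b) = (if fst b = 0 then pi / 2 else 0) * (if snd b = 0 then pi / 2 else 0)" for b
  proof -
    have "h b = (\<lambda>(x, y). (chebU (fst b) x * chebU (snd b) y) * sqrt (1 - x\<^sup>2) * sqrt (1 - y\<^sup>2))"
      by (auto simp: fun_eq_iff h_def phi_def)
    then show ?thesis using I2 by simp
  qed
  have hint: "h b integrable_on Q" for b
    unfolding Q_def h_def phi_def by (rule integrable_continuous) (intro continuous_intros)
  have zB: "(0, 0) \<in> ?B" by (simp add: Bidx_def)
  have delta: "(\<Sum>b\<in>?B. c (fst b) (snd b) * (if b = (0, 0) then 1 else 0)) = c 0 0"
  proof -
    have "(\<Sum>b\<in>?B. c (fst b) (snd b) * (if b = (0, 0) then 1 else 0)) = (\<Sum>b\<in>?B. if b = (0, 0) then c (fst b) (snd b) else 0)"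
      by (rule sum.cong) auto
    then show ?thesis using zB by simp
  qed
  have feq: "(\<lambda>(x, y). p (x, y) * sqrt (1 - x\<^sup>2) * sqrt (1 - y\<^sup>2)) = (\<lambda>z. \<Sum>b\<in>?B. c (fst b) (snd b) * h b z)"
  proof (rule ext, clarify)
    fix x y
    have "p (x, y) * sqrt (1 - x\<^sup>2) * sqrt (1 - y\<^sup>2) = (\<Sum>b\<in>?B. c (fst b) (snd b) * phi b (x, y)) * (sqrt (1 - x\<^sup>2) * sqrt (1 - y\<^sup>2))"
      by (simp only: pc mult.assoc)
    also have "\<dots> = (\<Sum>b\<in>?B. c (fst b) (snd b) * phi b (x, y) * (sqrt (1 - x\<^sup>2) * sqrt (1 - y\<^sup>2)))"
      by (rule sum_distrib_right)
    also have "\<dots> = (\<Sum>b\<in>?B. c (fst b) (snd b) * h b (x, y))"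
      by (rule sum.cong) (simp_all add: h_def ac_simps)
    finally show "p (x, y) * sqrt (1 - x\<^sup>2) * sqrt (1 - y\<^sup>2) = (\<Sum>b\<in>?B. c (fst b) (snd b) * h b (x, y))" .
  qed
  then have "integral Q (\<lambda>(x, y). p (x, y) * sqrt (1 - x\<^sup>2) * sqrt (1 - y\<^sup>2))
      = (\<Sum>b\<in>?B. integral Q (\<lambda>z. c (fst b) (snd b) * h b z))"
  proof -
    have "\<And>b. (\<lambda>z. c (fst b) (snd b) * h b z) integrable_on Q"
      using integrable_cmul[OF hint] by simp
    then show ?thesis
      using integral_sum[of ?B "\<lambda>b z. c (fst b) (snd b) * h b z" Q] feq
      by simp
  qed
  also have "\<dots> = (\<Sum>b\<in>?B. c (fst b) (snd b) * ((if fst b = 0 then pi / 2 else 0) * (if snd b = 0 then pi / 2 else 0)))"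
    by (simp add: hI)
  finally have L: "4 / pi\<^sup>2 * integral Q (\<lambda>(x, y). p (x, y) * sqrt (1 - x\<^sup>2) * sqrt (1 - y\<^sup>2))
      = (\<Sum>b\<in>?B. c (fst b) (snd b) * (4 / pi\<^sup>2 * ((if fst b = 0 then pi / 2 else 0) * (if snd b = 0 then pi / 2 else 0))))"
    by (simp add: sum_distrib_left ac_simps)
  also have "\<dots> = (\<Sum>b\<in>?B. c (fst b) (snd b) * (if b = (0, 0) then 1 else 0))"
    by (rule sum.cong) (auto simp: power2_eq_square prod_eq_iff)
  finally have L2: "4 / pi\<^sup>2 * integral Q (\<lambda>(x, y). p (x, y) * sqrt (1 - x\<^sup>2) * sqrt (1 - y\<^sup>2)) = c 0 0"
    using delta by simp
  let ?w = "\<lambda>m k. (1 - (MP_x n m)\<^sup>2) * (1 - (MP_y n m k)\<^sup>2)"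
  have "Cn n * (\<Sum>m = 1..n+1. \<Sum>k = 1..n div 2 + 1. ?w m k * p (MP_x n m, MP_y n m k))
     = Cn n * (\<Sum>m = 1..n+1. \<Sum>k = 1..n div 2 + 1. \<Sum>b\<in>?B. c (fst b) (snd b) * (?w m k * phi b (MP_x n m, MP_y n m k)))"
    by (simp add: pc sum_distrib_left ac_simps)
  also have "\<dots> = Cn n * (\<Sum>b\<in>?B. \<Sum>m = 1..n+1. \<Sum>k = 1..n div 2 + 1. c (fst b) (snd b) * (?w m k * phi b (MP_x n m, MP_y n m k)))"
    by (subst sum.swap, rule arg_cong[where f="\<lambda>u. Cn n * u"], rule sum.cong[OF refl], subst sum.swap, rule refl)
  also have "\<dots> = (\<Sum>b\<in>?B. c (fst b) (snd b) * (Cn n * (\<Sum>m = 1..n+1. \<Sum>k = 1..n div 2 + 1. ?w m k * phi b (MP_x n m, MP_y n m k))))"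
  proof -
    have e: "(\<Sum>m = 1..n+1. \<Sum>k = 1..n div 2 + 1. c (fst b) (snd b) * (?w m k * phi b (MP_x n m, MP_y n m k)))
       = c (fst b) (snd b) * (\<Sum>m = 1..n+1. \<Sum>k = 1..n div 2 + 1. ?w m k * phi b (MP_x n m, MP_y n m k))" for b
      by (simp only: sum_distrib_left)
    have "Cn n * (\<Sum>b\<in>?B. \<Sum>m = 1..n+1. \<Sum>k = 1..n div 2 + 1. c (fst b) (snd b) * (?w m k * phi b (MP_x n m, MP_y n m k)))
      = (\<Sum>b\<in>?B. Cn n * (\<Sum>m = 1..n+1. \<Sum>k = 1..n div 2 + 1. c (fst b) (snd b) * (?w m k * phi b (MP_x n m, MP_y n m k))))"
      by (rule sum_distrib_left)
    also have "\<dots> = (\<Sum>b\<in>?B. c (fst b) (snd b) * (Cn n * (\<Sum>m = 1..n+1. \<Sum>k = 1..n div 2 + 1. ?w m k * phi b (MP_x n m, MP_y n m k))))"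
      by (rule sum.cong[OF refl]) (simp only: e mult.left_commute)
    finally show ?thesis .
  qed
  also have "\<dots> = (\<Sum>b\<in>?B. c (fst b) (snd b) * (if b = (0, 0) then 1 else 0))"
  proof (rule sum.cong[OF refl])
    fix b assume b: "b \<in> ?B"
    obtain i j where ij: "b = (i, j)" "i + j \<le> 2 * n" using b unfolding Bidx_def by auto
    have "Cn n * (\<Sum>m = 1..n+1. \<Sum>k = 1..n div 2 + 1. ?w m k * phi b (MP_x n m, MP_y n m k))
        = (if i = 0 \<and> j = 0 then 1 else 0)"
      using disc_quad[OF assms(1) ij(2)] by (simp add: ij phi_def)
    then show "c (fst b) (snd b) * (Cn n * (\<Sum>m = 1..n+1. \<Sum>k = 1..n div 2 + 1. ?w m k * phi b (MP_x n m, MP_y n m k)))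
        = c (fst b) (snd b) * (if b = (0, 0) then 1 else 0)" using ij by simp
  qed
  also have "\<dots> = c 0 0" by (rule delta)
  finally show ?thesis using L2 by simp
qed

lemma W_nonneg: "W n s \<ge> 0"
proof -
  have "(cos t)\<^sup>2 \<le> 1" for t :: real using sin_cos_squared_add[of t] by (smt (verit) zero_le_power2)
  then have a: "1 - (MP_x n (fst s))\<^sup>2 \<ge> 0" "1 - (MP_y n (fst s) (snd s))\<^sup>2 \<ge> 0"
    by (auto simp: MP_x_def MP_y_def)
  have "Cn n \<ge> 0" by (simp add: Cn_def)
  then show ?thesis unfolding W_def MP_node_def using a by simp
qed

theorem theorem4:
  fixes n :: nat
  assumes "n > 0" and "even n"
  shows
   "(\<forall>p \<in> poly2 (2 * n).
       4 / pi\<^sup>2 * integral Q (\<lambda>(x, y). p (x, y) * sqrt (1 - x\<^sup>2) * sqrt (1 - y\<^sup>2))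
       = Cn n * (\<Sum>m = 1..n+1. \<Sum>k = 1..n div 2 + 1.
            (1 - (MP_x n m)\<^sup>2) * (1 - (MP_y n m k)\<^sup>2) * p (MP_x n m, MP_y n m k)))
    \<and> (\<forall>s \<in> MP_idx n.
         omega n s = Cn n * (1 - (fst (MP_node n s))\<^sup>2) * (1 - (snd (MP_node n s))\<^sup>2))
    \<and> (\<forall>f. continuous_on Q f \<longrightarrow>
         Ln n f \<in> poly2 n
         \<and> (\<forall>p \<in> poly2 n. dip n (\<lambda>z. f z - Ln n f z) p = 0)
         \<and> (\<forall>s \<in> MP_idx n. Ln n f (MP_node n s) = f (MP_node n s)))
    \<and> (\<exists>l. lagrange_basis n l)
    \<and> (\<forall>l. lagrange_basis n l \<longrightarrow> (\<forall>z.
         lebesgue_fun n l z = Cn n * (\<Sum>s \<in> MP_idx n.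
            (1 - (fst (MP_node n s))\<^sup>2) * (1 - (snd (MP_node n s))\<^sup>2)
            * \<bar>Kn n (MP_node n s) z\<bar>)))"
proof (intro conjI)
  show "\<forall>p \<in> poly2 (2 * n).
       4 / pi\<^sup>2 * integral Q (\<lambda>(x, y). p (x, y) * sqrt (1 - x\<^sup>2) * sqrt (1 - y\<^sup>2))
       = Cn n * (\<Sum>m = 1..n+1. \<Sum>k = 1..n div 2 + 1.
            (1 - (MP_x n m)\<^sup>2) * (1 - (MP_y n m k)\<^sup>2) * p (MP_x n m, MP_y n m k))"
    using part_i[OF assms(2)] by blast
next
  show "\<forall>s \<in> MP_idx n. omega n s = Cn n * (1 - (fst (MP_node n s))\<^sup>2) * (1 - (snd (MP_node n s))\<^sup>2)"
  proof
    fix s assume s: "s \<in> MP_idx n"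
    have k: "W n s * Kn n (MP_node n s) (MP_node n s) = 1"
      using lagrange_key[OF assms(2) s s] by simp
    have "Kn n (MP_node n s) (MP_node n s) = (\<Sum>i\<le>n. \<Sum>j\<le>n - i.
      (chebU i (fst (MP_node n s)))\<^sup>2 * (chebU j (snd (MP_node n s)))\<^sup>2)"
      unfolding Kn_def by (simp add: power2_eq_square ac_simps)
    then have "omega n s = 1 / Kn n (MP_node n s) (MP_node n s)" by (simp add: omega_def)
    also have "\<dots> = W n s"
    proof -
      have "Kn n (MP_node n s) (MP_node n s) \<noteq> 0" using k by auto
      then show ?thesis using k by (simp add: divide_eq_eq)
    qed
    finally show "omega n s = Cn n * (1 - (fst (MP_node n s))\<^sup>2) * (1 - (snd (MP_node n s))\<^sup>2)"
      by (simp add: W_def)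
  qed
next
  show "\<forall>f. continuous_on Q f \<longrightarrow>
         Ln n f \<in> poly2 n
         \<and> (\<forall>p \<in> poly2 n. dip n (\<lambda>z. f z - Ln n f z) p = 0)
         \<and> (\<forall>s \<in> MP_idx n. Ln n f (MP_node n s) = f (MP_node n s))"
  proof (intro allI impI conjI ballI)
    fix f :: "real \<times> real \<Rightarrow> real"
    show "Ln n f \<in> poly2 n" by (rule Ln_poly)
  next
    fix f :: "real \<times> real \<Rightarrow> real" and p assume "p \<in> poly2 n"
    show "dip n (\<lambda>z. f z - Ln n f z) p = 0"
      unfolding dip_def by (simp add: Ln_interp[OF assms(2)])
  next
    fix f :: "real \<times> real \<Rightarrow> real" and s assume "s \<in> MP_idx n"
    then show "Ln n f (MP_node n s) = f (MP_node n s)" by (rule Ln_interp[OF assms(2)])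
  qed
next
  show "\<exists>l. lagrange_basis n l"
  proof
    show "lagrange_basis n (\<lambda>s z. W n s * Kn n (MP_node n s) z)"
      unfolding lagrange_basis_def
    proof (intro conjI ballI)
      fix s assume "s \<in> MP_idx n"
      have "(\<lambda>z. W n s * Kn n (MP_node n s) z) \<in> span2 chebU n"
        by (rule span2_smult) (use Kn_poly poly2_chebU in auto)
      then show "(\<lambda>z. W n s * Kn n (MP_node n s) z) \<in> poly2 n" by (simp add: poly2_chebU)
    next
      fix s t assume s: "s \<in> MP_idx n" and t: "t \<in> MP_idx n"
      show "W n s * Kn n (MP_node n s) (MP_node n t) = (if s = t then 1 else 0)"
        using lagrange_key[OF assms(2) t s] by auto
    qed
  qed
next
  show "\<forall>l. lagrange_basis n l \<longrightarrow> (\<forall>z.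
         lebesgue_fun n l z = Cn n * (\<Sum>s \<in> MP_idx n.
            (1 - (fst (MP_node n s))\<^sup>2) * (1 - (snd (MP_node n s))\<^sup>2)
            * \<bar>Kn n (MP_node n s) z\<bar>))"
  proof (intro allI impI)
    fix l z assume l: "lagrange_basis n l"
    have ls: "l s z = W n s * Kn n (MP_node n s) z" if s: "s \<in> MP_idx n" for s
    proof -
      have "l s \<in> poly2 n" using l s unfolding lagrange_basis_def by blast
      then have "l s z = (\<Sum>t\<in>MP_idx n. W n t * l s (MP_node n t) * Kn n (MP_node n t) z)"
        by (rule reproduce[OF assms(2)])
      also have "\<dots> = (\<Sum>t\<in>MP_idx n. if t = s then W n s * Kn n (MP_node n s) z else 0)"
        by (rule sum.cong) (use l s in \<open>auto simp: lagrange_basis_def\<close>)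
      also have "\<dots> = W n s * Kn n (MP_node n s) z" using s by simp
      finally show ?thesis .
    qed
    have "lebesgue_fun n l z = (\<Sum>s\<in>MP_idx n. W n s * \<bar>Kn n (MP_node n s) z\<bar>)"
      unfolding lebesgue_fun_def
      by (rule sum.cong) (auto simp: ls abs_mult W_nonneg)
    also have "\<dots> = Cn n * (\<Sum>s \<in> MP_idx n.
            (1 - (fst (MP_node n s))\<^sup>2) * (1 - (snd (MP_node n s))\<^sup>2) * \<bar>Kn n (MP_node n s) z\<bar>)"
      by (simp add: W_def sum_distrib_left ac_simps)
    finally show "lebesgue_fun n l z = Cn n * (\<Sum>s \<in> MP_idx n.
            (1 - (fst (MP_node n s))\<^sup>2) * (1 - (snd (MP_node n s))\<^sup>2) * \<bar>Kn n (MP_node n s) z\<bar>)" .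
  qed
qed

end
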